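(* Let $P_n$ be the path on $n>2$ vertices $1,\dots,n$ with edges $e_i=\{i,i+1\}$ ($1\le i\le n-1$), let $f_j=\{j,j+2\}$ ($1\le j\le n-2$), let $B=\{e_1,f_1,\dots,e_{n-2},f_{n-2},e_{n-1}\}$, and let $\mathfrak{D}_{P_n}=\mathfrak{D}_2(P_n)[B,B]$. Write $\det(xI-\mathfrak{D}_{P_n})=\sum_{i=0}^{2n-3}a_ix^i$. If $|a_\ell|=\max\{|a_0|,|a_1|,\dots,|a_{2n-4}|\}$, then $\ell\le\lfloor\frac{7n}{5}\rfloor$.
   Context: For a tree $T$, let $\mathcal{V}_2$ be the set of 2-element vertex subsets (edges regarded as elements of $\mathcal{V}_2$). The 2-Steiner distance matrix $\mathfrak{D}_2(T)$ is indexed by $\mathcal{V}_2$, with entry in row $\{i,j\}$, column $\{k,l\}$ equal to the minimum number of edges of a connected subtree of $T$ whose vertex set contains $i,j,k,l$. $M[B,B]$ denotes the principal submatrix with rows and columns indexed by $B$. *)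

theory Defs
  imports "Jordan_Normal_Form.Char_Poly"
begin

text \<open>Graphs are given by a vertex set V and a set E of edges (2-element vertex sets).\<close>

definition connected_subgraph :: "'v set \<Rightarrow> 'v set set \<Rightarrow> 'v set \<Rightarrow> 'v set set \<Rightarrow> bool" where
  "connected_subgraph V E W F \<longleftrightarrow>
     W \<subseteq> V \<and> W \<noteq> {} \<and> F \<subseteq> E \<and> (\<forall>e\<in>F. e \<subseteq> W) \<and>
     (\<forall>u\<in>W. \<forall>w\<in>W. (u, w) \<in> {(x, y). {x, y} \<in> F}\<^sup>*)"

definition steiner_dist :: "'v set \<Rightarrow> 'v set set \<Rightarrow> 'v set \<Rightarrow> nat" where
  "steiner_dist V E S = (LEAST k. \<exists>W F. connected_subgraph V E W F \<and> S \<subseteq> W \<and> finite F \<and> card F = k)"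

definition steiner2_entry :: "'v set \<Rightarrow> 'v set set \<Rightarrow> 'v set \<Rightarrow> 'v set \<Rightarrow> nat" where
  "steiner2_entry V E A C = steiner_dist V E (A \<union> C)"

definition path_V :: "nat \<Rightarrow> nat set" where
  "path_V n = {1..n}"

definition path_E :: "nat \<Rightarrow> nat set set" where
  "path_E n = {{i, i + 1} | i. 1 \<le> i \<and> i \<le> n - 1}"

text \<open>The ordered index set B = (e_1, f_1, e_2, f_2, ..., e_{n-2}, f_{n-2}, e_{n-1}), with
  e_i = {i,i+1} and f_j = {j,j+2}. Position k (0-based, k < 2n-3): k even gives e_{k/2+1},
  k odd gives f_{(k+1)/2}.\<close>

definition B_elem :: "nat \<Rightarrow> nat set" where
  "B_elem k = (if even k then {k div 2 + 1, k div 2 + 2} else {(k + 1) div 2, (k + 1) div 2 + 2})"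

definition D_path :: "nat \<Rightarrow> int mat" where
  "D_path n = mat (2 * n - 3) (2 * n - 3)
     (\<lambda>(r, c). int (steiner2_entry (path_V n) (path_E n) (B_elem r) (B_elem c)))"

end

theory Submission
  imports Defs
begin

definition psub :: "'a mat \<Rightarrow> nat set \<Rightarrow> 'a mat" where
  "psub A S = mat (card S) (card S)
     (\<lambda>(i,j). A $$ (sorted_list_of_set S ! i, sorted_list_of_set S ! j))"

lemma psub_carrier[simp]: "psub A S \<in> carrier_mat (card S) (card S)"
  unfolding psub_def by auto

lemma remove1_nth_distinct:
  assumes "distinct L" "i < length L"
  shows "remove1 (L ! i) L = take i L @ drop (Suc i) L"
  using assms
proof (induction L arbitrary: i)
  case Nil then show ?case by simp
next
  case (Cons a L)
  show ?case
  proof (cases i)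
    case 0 then show ?thesis by simp
  next
    case (Suc j)
    with Cons have "L ! j \<noteq> a" using nth_mem by fastforce
    with Cons Suc show ?thesis by auto
  qed
qed

lemma psub_delete:
  assumes S: "finite S" and i: "i < card S"
  shows "mat_delete (psub A S) i i = psub A (S - {sorted_list_of_set S ! i})"
proof -
  let ?L = "sorted_list_of_set S"
  let ?x = "?L ! i"
  have len: "length ?L = card S" by simp
  have dist: "distinct ?L" by simp
  have xS: "?x \<in> S" using i S
    by (metis len nth_mem set_sorted_list_of_set)
  have c: "card (S - {?x}) = card S - 1" using xS S by simp
  have L': "sorted_list_of_set (S - {?x}) = take i ?L @ drop (Suc i) ?L"
    using sorted_list_of_set_remove[OF S] remove1_nth_distinct[OF dist] i len by simp
  have nth: "(take i ?L @ drop (Suc i) ?L) ! j = ?L ! (if j < i then j else Suc j)"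
    if "j < card S - 1" for j
    using that i len by (auto simp: nth_append min_def)
  show ?thesis
    unfolding mat_delete_def psub_def
    by (rule eq_matI, auto simp: c L' nth)
qed

lemma char_poly_psub_pderiv:
  assumes S: "finite S"
  shows "pderiv (char_poly (psub (A :: 'a :: idom mat) S)) = (\<Sum>x\<in>S. char_poly (psub A (S - {x})))"
proof -
  let ?L = "sorted_list_of_set S"
  have "pderiv (char_poly (psub A S)) = (\<Sum>i<card S. char_poly (mat_delete (psub A S) i i))"
    by (rule pderiv_char_poly, simp)
  also have "\<dots> = (\<Sum>i<card S. char_poly (psub A (S - {?L ! i})))"
    by (intro sum.cong refl) (simp add: psub_delete[OF S])
  also have "\<dots> = (\<Sum>x\<in>S. char_poly (psub A (S - {x})))"
  proof -
    have inj: "inj_on (nth ?L) {..<card S}"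
      by (rule inj_on_nth, auto)
    have img: "nth ?L ` {..<card S} = S"
      using S by (metis atLeast0LessThan distinct_sorted_list_of_set image_set length_sorted_list_of_set list.set_map map_nth set_sorted_list_of_set set_upt)
    show ?thesis using sum.reindex[OF inj, of "\<lambda>x. char_poly (psub A (S - {x}))"] img by simp
  qed
  finally show ?thesis .
qed

definition Sub :: "'b set \<Rightarrow> nat \<Rightarrow> 'b set set" where
  "Sub S k = {T. T \<subseteq> S \<and> card T = k}"

lemma finite_Sub[simp]: "finite S \<Longrightarrow> finite (Sub S k)"
  unfolding Sub_def by (rule finite_subset[of _ "Pow S"], auto)

lemma sum_Sub_reindex:
  fixes g :: "'b set \<Rightarrow> 'b \<Rightarrow> 'c :: comm_monoid_add"
  assumes S: "finite S"
  shows "(\<Sum>T\<in>Sub S (Suc k). \<Sum>x\<in>T. g T x) = (\<Sum>U\<in>Sub S k. \<Sum>x\<in>S - U. g (insert x U) x)"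
proof -
  have fin1: "finite (Sigma (Sub S (Suc k)) (\<lambda>T. T))"
    using S by (auto intro!: finite_SigmaI simp: Sub_def dest: finite_subset)
  have fin2: "finite (Sigma (Sub S k) (\<lambda>U. S - U))"
    using S by (auto intro!: finite_SigmaI)
  have "(\<Sum>T\<in>Sub S (Suc k). \<Sum>x\<in>T. g T x) = (\<Sum>(T,x)\<in>Sigma (Sub S (Suc k)) (\<lambda>T. T). g T x)"
    using S by (subst sum.Sigma, auto simp: Sub_def dest: finite_subset)
  also have "\<dots> = (\<Sum>(U,x)\<in>Sigma (Sub S k) (\<lambda>U. S - U). g (insert x U) x)"
    apply (rule sum.reindex_bij_witness[of _ "\<lambda>(U,x). (insert x U, x)" "\<lambda>(T,x). (T - {x}, x)"])
    using S by (auto simp: Sub_def card_insert_if insert_absorb dest: finite_subset)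
  also have "\<dots> = (\<Sum>U\<in>Sub S k. \<Sum>x\<in>S - U. g (insert x U) x)"
    using S by (subst sum.Sigma, auto)
  finally show ?thesis .
qed

lemma higher_pderiv_psub:
  fixes A :: "'a :: idom mat"
  assumes S: "finite S"
  shows "m \<le> card S \<Longrightarrow> (pderiv ^^ m) (char_poly (psub A S))
     = Polynomial.smult (of_nat (fact m)) (\<Sum>T\<in>Sub S (card S - m). char_poly (psub A T))"
proof (induction m)
  case 0
  have "Sub S (card S) = {S}" using S unfolding Sub_def
    by (auto dest: card_subset_eq)
  then show ?case by simp
next
  case (Suc m)
  obtain k where k: "card S - m = Suc k" using Suc.prems
    by (metis Suc_diff_le Suc_leD diff_Suc_Suc zero_less_Suc less_imp_Suc_add add.commute diff_diff_cancel le_Suc_ex)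
  have k2: "card S - Suc m = k" using k by simp
  have "(pderiv ^^ Suc m) (char_poly (psub A S)) = pderiv ((pderiv ^^ m) (char_poly (psub A S)))"
    by simp
  also have "\<dots> = Polynomial.smult (of_nat (fact m)) (\<Sum>T\<in>Sub S (Suc k). pderiv (char_poly (psub A T)))"
    using Suc by (simp add: pderiv_smult pderiv_sum k)
  also have "(\<Sum>T\<in>Sub S (Suc k). pderiv (char_poly (psub A T)))
      = (\<Sum>T\<in>Sub S (Suc k). \<Sum>x\<in>T. char_poly (psub A (T - {x})))"
    using S by (intro sum.cong refl char_poly_psub_pderiv) (auto simp: Sub_def dest: finite_subset)
  also have "\<dots> = (\<Sum>U\<in>Sub S k. \<Sum>x\<in>S - U. char_poly (psub A (insert x U - {x})))"
    by (rule sum_Sub_reindex[OF S])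
  also have "\<dots> = (\<Sum>U\<in>Sub S k. of_nat (Suc m) * char_poly (psub A U))"
  proof (intro sum.cong refl)
    fix U assume U: "U \<in> Sub S k"
    then have "card (S - U) = Suc m" using S k Suc.prems
      by (auto simp: Sub_def card_Diff_subset[OF finite_subset] dest: finite_subset)
    moreover have "x \<in> S - U \<Longrightarrow> insert x U - {x} = U" for x by auto
    ultimately show "(\<Sum>x\<in>S - U. char_poly (psub A (insert x U - {x}))) = of_nat (Suc m) * char_poly (psub A U)"
      by simp
  qed
  also have "\<dots> = Polynomial.smult (of_nat (Suc m)) (\<Sum>U\<in>Sub S k. char_poly (psub A U))"
    by (simp add: sum_distrib_left of_nat_poly smult_sum2)
  finally show ?case by (simp add: k2 Polynomial.smult_smult algebra_simps)
qed

lemma coeff0_char_poly: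
  fixes B :: "'a :: comm_ring_1 mat"
  assumes B: "B \<in> carrier_mat k k"
  shows "coeff (char_poly B) 0 = (-1)^k * det B"
proof -
  have "coeff (char_poly B) 0 = poly (det (char_poly_matrix B)) 0"
    by (simp add: char_poly_def poly_0_coeff_0)
  also have "\<dots> = det (map_mat (\<lambda>p. poly p 0) (char_poly_matrix B))"
    by (rule comm_ring_hom.hom_det[OF poly_hom.comm_ring_hom_axioms, symmetric])
  also have "map_mat (\<lambda>p. poly p 0) (char_poly_matrix B) = (-1) \<cdot>\<^sub>m B"
    using B by (intro eq_matI) (auto simp: char_poly_matrix_def)
  also have "det ((-1) \<cdot>\<^sub>m B) = (-1)^k * det B"
    using B by (simp add: det_smult)
  finally show ?thesis .
qed

lemma psub_full:
  assumes A: "A \<in> carrier_mat N N"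
  shows "psub A {0..<N} = A"
  using A by (intro eq_matI) (auto simp: psub_def sorted_list_of_set_range)

lemma coeff_char_poly_minors:
  fixes A :: "int mat"
  assumes A: "A \<in> carrier_mat N N" and l: "l \<le> N"
  shows "coeff (char_poly A) l = (\<Sum>T\<in>Sub {0..<N} (N - l). (-1)^(N-l) * det (psub A T))"
proof -
  have "of_nat (fact l) * coeff (char_poly A) l = coeff ((pderiv ^^ l) (char_poly (psub A {0..<N}))) 0"
    by (simp add: coeff_higher_pderiv psub_full[OF A] pochhammer_fact pochhammer_of_nat[symmetric])
  also have "\<dots> = of_nat (fact l) * (\<Sum>T\<in>Sub {0..<N} (N - l). coeff (char_poly (psub A T)) 0)"
    using l by (simp add: higher_pderiv_psub coeff_sum)
  also have "(\<Sum>T\<in>Sub {0..<N} (N - l). coeff (char_poly (psub A T)) 0)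
     = (\<Sum>T\<in>Sub {0..<N} (N - l). (-1)^(N-l) * det (psub A T))"
    by (intro sum.cong refl) (simp add: coeff0_char_poly[OF psub_carrier] Sub_def)
  finally show ?thesis by simp
qed

lemma edge_inj: "{i, Suc i} = {j, Suc j} \<Longrightarrow> i = (j::nat)"
  by (auto simp: doubleton_eq_iff)

lemma path_edge_cases:
  assumes "{y, z} \<in> path_E n"
  shows "z = Suc y \<or> y = Suc z"
  using assms unfolding path_E_def by (auto simp: doubleton_eq_iff)

lemma path_lower:
  assumes cs: "connected_subgraph (path_V n) (path_E n) W F"
    and SW: "S \<subseteq> W" and fin: "finite F" and Sfin: "finite S" and Sne: "S \<noteq> {}"
  shows "Max S - Min S \<le> card F"
proof -
  let ?a = "Min S" and ?b = "Max S"
  let ?r = "{(x, y). {x, y} \<in> F}"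
  have aW: "?a \<in> W" and bW: "?b \<in> W" using SW Min_in[OF Sfin Sne] Max_in[OF Sfin Sne] by auto
  have conn: "(?a, ?b) \<in> ?r\<^sup>*" using cs aW bW unfolding connected_subgraph_def by blast
  have FE: "F \<subseteq> path_E n" using cs unfolding connected_subgraph_def by blast
  have inF: "{i, Suc i} \<in> F" if i: "?a \<le> i" "i < ?b" for i
  proof (rule ccontr)
    assume nF: "{i, Suc i} \<notin> F"
    have "(?a, y) \<in> ?r\<^sup>* \<Longrightarrow> y \<le> i" for y
    proof (induction rule: rtrancl_induct)
      case base then show ?case using i by simp
    next
      case (step y z)
      then have yz: "{y, z} \<in> F" by simp
      then have "z = Suc y \<or> y = Suc z" using FE path_edge_cases by blast
      then show ?case
      proof
        assume z: "z = Suc y"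
        show ?thesis
        proof (cases "y = i")
          case True then show ?thesis using yz z nF by simp
        next
          case False then show ?thesis using step.IH z by simp
        qed
      qed (use step.IH in simp)
    qed
    from this[OF conn] i show False by simp
  qed
  have "card {?a..<?b} \<le> card F"
  proof (rule card_inj_on_le[of "\<lambda>i. {i, Suc i}"])
    show "inj_on (\<lambda>i. {i, Suc i}) {?a..<?b}" by (auto intro: inj_onI edge_inj)
    show "(\<lambda>i. {i, Suc i}) ` {?a..<?b} \<subseteq> F" using inF by auto
  qed (rule fin)
  then show ?thesis by simp
qed

lemma path_upper:
  assumes Sfin: "finite S" and Sne: "S \<noteq> {}" and Sn: "S \<subseteq> {1..n}"
  shows "\<exists>W F. connected_subgraph (path_V n) (path_E n) W F \<and> S \<subseteq> W \<and> finite F \<and> card F = Max S - Min S"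
proof -
  let ?a = "Min S" and ?b = "Max S"
  define F where "F = (\<lambda>i. {i, Suc i}) ` {?a..<?b}"
  define W where "W = {?a..?b}"
  let ?r = "{(x, y). {x, y} \<in> F}"
  have a1: "1 \<le> ?a" using Sn Sfin Sne by auto
  have bn: "?b \<le> n" using Sn Sfin Sne by auto
  have ab: "?a \<le> ?b" using Sfin Sne by simp
  have step: "\<And>d. ?a + d \<le> ?b \<Longrightarrow> ?a \<le> u \<Longrightarrow> u + d \<le> ?b \<Longrightarrow> (u, u + d) \<in> ?r\<^sup>* \<and> (u + d, u) \<in> ?r\<^sup>*" for u
  proof -
    fix d show "?a + d \<le> ?b \<Longrightarrow> ?a \<le> u \<Longrightarrow> u + d \<le> ?b \<Longrightarrow> (u, u + d) \<in> ?r\<^sup>* \<and> (u + d, u) \<in> ?r\<^sup>*"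
    proof (induction d)
      case 0 then show ?case by simp
    next
      case (Suc d)
      then have IH: "(u, u + d) \<in> ?r\<^sup>* \<and> (u + d, u) \<in> ?r\<^sup>*" by simp
      have e: "{u + d, Suc (u + d)} \<in> F" unfolding F_def using Suc.prems by auto
      then have e1: "(u + d, u + Suc d) \<in> ?r" by simp
      have e2: "(u + Suc d, u + d) \<in> ?r" using e by (simp add: insert_commute)
      show ?case using IH e1 e2
        by (meson rtrancl_into_rtrancl converse_rtrancl_into_rtrancl)
    qed
  qed
  have conn: "(u, w) \<in> ?r\<^sup>*" if "u \<in> W" "w \<in> W" for u w
  proof (cases "u \<le> w")
    case True
    then obtain d where "w = u + d" using le_Suc_ex by blast
    then show ?thesis using step[of d u] that unfolding W_def by auto
  next
    case False
    then obtain d where "u = w + d" using le_Suc_ex[of w u] by auto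
    then show ?thesis using step[of d w] that unfolding W_def by auto
  qed
  have cs: "connected_subgraph (path_V n) (path_E n) W F"
    unfolding connected_subgraph_def
  proof (intro conjI)
    show "W \<subseteq> path_V n" unfolding W_def path_V_def using a1 bn by auto
    show "W \<noteq> {}" unfolding W_def using ab by auto
    show "F \<subseteq> path_E n" unfolding F_def path_E_def using a1 bn by force
    show "\<forall>e\<in>F. e \<subseteq> W" unfolding F_def W_def by auto
    show "\<forall>u\<in>W. \<forall>w\<in>W. (u, w) \<in> ?r\<^sup>*" using conn by blast
  qed
  have cF: "card F = ?b - ?a"
    unfolding F_def by (subst card_image) (auto intro: inj_onI edge_inj)
  have "S \<subseteq> W" unfolding W_def using Sfin by auto
  moreover have "finite F" unfolding F_def by simp
  ultimately show ?thesis using cs cF by blast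
qed

lemma path_steiner:
  assumes "finite S" "S \<noteq> {}" "S \<subseteq> {1..n}"
  shows "steiner_dist (path_V n) (path_E n) S = Max S - Min S"
  unfolding steiner_dist_def
proof (rule Least_equality)
  show "\<exists>W F. connected_subgraph (path_V n) (path_E n) W F \<and> S \<subseteq> W \<and> finite F \<and> card F = Max S - Min S"
    by (rule path_upper[OF assms])
next
  fix k assume "\<exists>W F. connected_subgraph (path_V n) (path_E n) W F \<and> S \<subseteq> W \<and> finite F \<and> card F = k"
  then show "Max S - Min S \<le> k" using path_lower assms by blast
qed

definition lo :: "nat \<Rightarrow> nat" where "lo k = k div 2 + 1"
definition hi :: "nat \<Rightarrow> nat" where "hi k = (k + 1) div 2 + 2"

lemma B_elem_eq: "B_elem k = {lo k, hi k}"
proof (cases "even k")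
  case True
  then obtain m where m: "k = 2 * m" by (rule evenE)
  then show ?thesis unfolding B_elem_def lo_def hi_def by simp
next
  case False
  then obtain m where m: "k = 2 * m + 1" by (rule oddE)
  have "(2 * m + 1 + 1) div 2 = m + 1" by simp
  then show ?thesis using m unfolding B_elem_def lo_def hi_def by simp
qed

lemma lo_mono: "r \<le> c \<Longrightarrow> lo r \<le> lo c"
  unfolding lo_def by (simp add: div_le_mono)

lemma hi_mono: "r \<le> c \<Longrightarrow> hi r \<le> hi c"
  unfolding hi_def by (simp add: div_le_mono)

lemma lo_le_hi: "lo k \<le> hi k" unfolding lo_def hi_def by (metis add_le_mono le_add1 div_le_mono one_le_numeral)

lemma hi_bound: "k < 2 * n - 3 \<Longrightarrow> hi k \<le> n"
proof -
  assume "k < 2 * n - 3"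
  then have "k + 1 \<le> 2 * (n - 2) + 1" by simp
  then have "(k + 1) div 2 \<le> (2 * (n - 2) + 1) div 2" by (rule div_le_mono)
  then have "(k + 1) div 2 \<le> n - 2" by simp
  moreover have "n \<ge> 2" using \<open>k < 2 * n - 3\<close> by simp
  ultimately show ?thesis unfolding hi_def by simp
qed

lemma D_entry:
  assumes "r < 2 * n - 3" "c < 2 * n - 3"
  shows "D_path n $$ (r, c) = int (hi (max r c)) - int (lo (min r c))"
proof -
  let ?S = "B_elem r \<union> B_elem c"
  have S: "?S = {lo r, hi r, lo c, hi c}" by (auto simp: B_elem_eq)
  have Sn: "?S \<subseteq> {1..n}" using hi_bound[OF assms(1)] hi_bound[OF assms(2)] lo_le_hi[of r] lo_le_hi[of c]
    unfolding S by (simp add: lo_def)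
  have mx: "Max ?S = hi (max r c)"
  proof (rule Max_eqI)
    show "finite ?S" unfolding S by simp
    show "y \<le> hi (max r c)" if "y \<in> ?S" for y
    proof -
      have "y \<in> {lo r, hi r, lo c, hi c}" using that S by simp
      moreover have "hi r \<le> hi (max r c)" "hi c \<le> hi (max r c)" by (simp_all add: hi_mono)
      ultimately show ?thesis using lo_le_hi[of r] lo_le_hi[of c] by auto
    qed
    show "hi (max r c) \<in> ?S" unfolding S by (simp add: max_def)
  qed
  have mn: "Min ?S = lo (min r c)"
  proof (rule Min_eqI)
    show "finite ?S" unfolding S by simp
    show "lo (min r c) \<le> y" if "y \<in> ?S" for y
    proof -
      have "y \<in> {lo r, hi r, lo c, hi c}" using that S by simp
      moreover have "lo (min r c) \<le> lo r" "lo (min r c) \<le> lo c" by (simp_all add: lo_mono)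
      ultimately show ?thesis using lo_le_hi[of r] lo_le_hi[of c] by auto
    qed
    show "lo (min r c) \<in> ?S" unfolding S by (simp add: min_def)
  qed
  have le: "lo (min r c) \<le> hi (max r c)"
    using lo_mono[of "min r c" "max r c"] lo_le_hi[of "max r c"] by (meson le_trans min.cobounded1 max.cobounded1)
  have "D_path n $$ (r, c) = int (steiner_dist (path_V n) (path_E n) ?S)"
    using assms unfolding D_path_def steiner2_entry_def by (simp del: Max_insert Min_insert)
  also have "\<dots> = int (Max ?S - Min ?S)"
  proof -
    have fin: "finite ?S" unfolding S by simp
    have ne: "?S \<noteq> {}" unfolding S by simp
    show ?thesis by (simp only: path_steiner[OF fin ne Sn])
  qed
  also have "\<dots> = int (hi (max r c) - lo (min r c))" by (simp only: mx mn)
  finally show ?thesis using le by simp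
qed

definition Zm :: "int mat \<Rightarrow> int \<Rightarrow> int \<Rightarrow> int mat" where
  "(Zm M v d) = mat (Suc (dim_row M)) (Suc (dim_row M))
     (\<lambda>(i,j). if i < dim_row M \<and> j < dim_row M then M $$ (i,j)
              else if i = dim_row M \<and> j = dim_row M then d else v)"

lemma Zm_carrier[simp]: "(Zm M v d) \<in> carrier_mat (Suc (dim_row M)) (Suc (dim_row M))"
  unfolding Zm_def by simp

lemma cofactor_row_indep:
  assumes A: "A \<in> carrier_mat n n" and B: "B \<in> carrier_mat n n" and k: "k < n"
    and eq: "\<And>i j. i < n \<Longrightarrow> j < n \<Longrightarrow> i \<noteq> k \<Longrightarrow> A $$ (i,j) = B $$ (i,j)"
  shows "cofactor A k j = cofactor B k j"
proof -
  have "mat_delete A k j = mat_delete B k j"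
    using A B by (intro eq_matI) (auto simp: mat_delete_def intro!: eq)
  then show ?thesis unfolding cofactor_def by simp
qed

lemma Zm_det:
  assumes M: "M \<in> carrier_mat k k"
  shows "det (Zm M v d) = d * det M + v^2 * det (Zm M 1 0)"
proof -
  have dk: "dim_row M = k" using M by simp
  have Zc: "(Zm M v d) \<in> carrier_mat (Suc k) (Suc k)" "(Zm M v 0) \<in> carrier_mat (Suc k) (Suc k)"
    "(Zm M 1 0) \<in> carrier_mat (Suc k) (Suc k)" using dk by auto
  have cof: "cofactor (Zm M v d) k j = cofactor (Zm M v 0) k j" for j
    by (rule cofactor_row_indep[OF Zc(1) Zc(2)]) (auto simp: Zm_def dk)
  have ent1: "(Zm M v d) $$ (k,j) = (if j < k then v else d)" if "j < Suc k" for j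
    using that dk unfolding Zm_def by (cases "j < k") (simp_all add: less_Suc_eq)
  have ent2: "(Zm M v 0) $$ (k,j) = (if j < k then v else 0)" if "j < Suc k" for j
    using that dk unfolding Zm_def by (cases "j < k") (simp_all add: less_Suc_eq)
  have "det (Zm M v d) = (\<Sum>j<Suc k. (Zm M v d) $$ (k,j) * cofactor (Zm M v d) k j)"
    by (rule laplace_expansion_row[OF Zc(1)]) simp
  also have "\<dots> = (\<Sum>j<k. v * cofactor (Zm M v 0) k j) + d * cofactor (Zm M v 0) k k"
    by (simp add: cof ent1)
  finally have e1: "det (Zm M v d) = (\<Sum>j<k. v * cofactor (Zm M v 0) k j) + d * cofactor (Zm M v 0) k k" .
  have "det (Zm M v 0) = (\<Sum>j<Suc k. (Zm M v 0) $$ (k,j) * cofactor (Zm M v 0) k j)"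
    by (rule laplace_expansion_row[OF Zc(2)]) simp
  also have "\<dots> = (\<Sum>j<k. v * cofactor (Zm M v 0) k j)"
    by (simp add: ent2)
  finally have e2: "det (Zm M v 0) = (\<Sum>j<k. v * cofactor (Zm M v 0) k j)" .
  have "mat_delete (Zm M v 0) k k = M"
    using M by (intro eq_matI) (auto simp: mat_delete_def Zm_def)
  then have e3: "cofactor (Zm M v 0) k k = det M"
    unfolding cofactor_def by simp
  have tr: "(Zm M v 0) = transpose_mat (multrow k v (transpose_mat (multrow k v (Zm M 1 0))))"
  proof (rule eq_matI)
    fix i j assume ij: "i < dim_row (transpose_mat (multrow k v (transpose_mat (multrow k v (Zm M 1 0)))))"
       "j < dim_col (transpose_mat (multrow k v (transpose_mat (multrow k v (Zm M 1 0)))))"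
    then have i: "i < Suc k" and j: "j < Suc k" using Zc by auto
    show "Zm M v 0 $$ (i, j) = transpose_mat (multrow k v (transpose_mat (multrow k v (Zm M 1 0)))) $$ (i, j)"
      using i j dk unfolding Zm_def by (auto simp: less_Suc_eq)
  qed (use Zc in auto)
  have c1: "multrow k v (Zm M 1 0) \<in> carrier_mat (Suc k) (Suc k)" using Zc by simp
  have c2: "transpose_mat (multrow k v (Zm M 1 0)) \<in> carrier_mat (Suc k) (Suc k)" using c1 by simp
  have c3: "multrow k v (transpose_mat (multrow k v (Zm M 1 0))) \<in> carrier_mat (Suc k) (Suc k)" using c2 by simp
  have "det (Zm M v 0) = det (multrow k v (transpose_mat (multrow k v (Zm M 1 0))))"
    unfolding tr by (rule det_transpose[OF c3])
  also have "\<dots> = v * det (transpose_mat (multrow k v (Zm M 1 0)))"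
    by (rule det_multrow[OF _ c2]) simp
  also have "\<dots> = v * det (multrow k v (Zm M 1 0))"
    by (simp add: det_transpose[OF c1])
  also have "\<dots> = v * (v * det (Zm M 1 0))"
    by (simp add: det_multrow[OF _ Zc(3)])
  finally have "det (Zm M v 0) = v * (v * det (Zm M 1 0))" .
  then show ?thesis using e1 e2 e3 by (simp add: power2_eq_square)
qed

definition Mx :: "nat list \<Rightarrow> int mat" where
  "Mx L = mat (length L) (length L) (\<lambda>(i,j). int (hi (L ! max i j)) - int (lo (L ! min i j)))"

definition Bd :: "nat list \<Rightarrow> int" where
  "Bd L = det (Zm (Mx L) 1 0)"

lemma Mx_carrier[simp]: "Mx L \<in> carrier_mat (length L) (length L)"
  unfolding Mx_def by simp

lemma Mx_dim[simp]: "dim_row (Mx L) = length L" "dim_col (Mx L) = length L"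
  unfolding Mx_def by simp_all

lemma lo_hi_sum: "lo k + hi k = k + 3"
  unfolding lo_def hi_def by presburger

lemma Mx_snoc_entries:
  assumes k: "length L = k" and L: "L \<noteq> []"
  shows "\<And>i j. i < k \<Longrightarrow> j < k \<Longrightarrow> Mx (L @ [t]) $$ (i,j) = Mx L $$ (i,j)"
    and "\<And>j. j < k \<Longrightarrow> Mx (L @ [t]) $$ (k,j) = int (hi t) - int (lo (L ! j))"
    and "\<And>i. i < k \<Longrightarrow> Mx (L @ [t]) $$ (i,k) = int (hi t) - int (lo (L ! i))"
    and "Mx (L @ [t]) $$ (k,k) = int (hi t) - int (lo t)"
    and "\<And>j. j < k \<Longrightarrow> Mx (L @ [t]) $$ (k - 1,j) = int (hi (last L)) - int (lo (L ! j))"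
    and "\<And>i. i < k \<Longrightarrow> Mx (L @ [t]) $$ (i,k - 1) = int (hi (last L)) - int (lo (L ! i))"
    and "Mx (L @ [t]) $$ (k - 1,k) = int (hi t) - int (lo (last L))"
    and "Mx (L @ [t]) $$ (k,k - 1) = int (hi t) - int (lo (last L))"
proof -
  have lastL: "L ! (k - 1) = last L" using k L by (simp add: last_conv_nth)
  have k0: "k > 0" using k L by auto
  have mm: "\<And>j. j < k \<Longrightarrow> max (k - 1) j = k - 1" "\<And>j. j < k \<Longrightarrow> min (k - 1) j = j"
     "\<And>j. j < k \<Longrightarrow> max j (k - 1) = k - 1" "\<And>j. j < k \<Longrightarrow> min j (k - 1) = j" by auto
  have mm2: "max (k - 1) k = k" "min (k - 1) k = k - 1" "max k (k - 1) = k" "min k (k - 1) = k - 1" by auto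
  show "\<And>i j. i < k \<Longrightarrow> j < k \<Longrightarrow> Mx (L @ [t]) $$ (i,j) = Mx L $$ (i,j)"
    using k by (simp add: Mx_def nth_append max_def min_def)
  show "\<And>j. j < k \<Longrightarrow> Mx (L @ [t]) $$ (k,j) = int (hi t) - int (lo (L ! j))"
    using k by (simp add: Mx_def nth_append max_def min_def)
  show "\<And>i. i < k \<Longrightarrow> Mx (L @ [t]) $$ (i,k) = int (hi t) - int (lo (L ! i))"
    using k by (simp add: Mx_def nth_append max_def min_def)
  show "Mx (L @ [t]) $$ (k,k) = int (hi t) - int (lo t)"
    using k by (simp add: Mx_def nth_append)
  show "\<And>j. j < k \<Longrightarrow> Mx (L @ [t]) $$ (k - 1,j) = int (hi (last L)) - int (lo (L ! j))"
    using k k0 lastL by (simp add: Mx_def nth_append mm)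
  show "\<And>i. i < k \<Longrightarrow> Mx (L @ [t]) $$ (i,k - 1) = int (hi (last L)) - int (lo (L ! i))"
    using k k0 lastL by (simp add: Mx_def nth_append mm)
  show "Mx (L @ [t]) $$ (k - 1,k) = int (hi t) - int (lo (last L))"
    using k k0 lastL by (simp add: Mx_def nth_append mm2)
  show "Mx (L @ [t]) $$ (k,k - 1) = int (hi t) - int (lo (last L))"
    using k k0 lastL by (simp add: Mx_def nth_append mm2)
qed

lemma Mx_snoc_det:
  assumes L: "L \<noteq> []"
  shows "det (Mx (L @ [t])) = - (int t - int (last L)) * det (Mx L)
           + (int (hi t) - int (hi (last L)))^2 * Bd L"
proof -
  define k where "k = length L"
  have k0: "k > 0" using L unfolding k_def by auto
  obtain p where kp: "k = Suc p" using k0 by (cases k) auto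
  let ?A = "Mx (L @ [t])"
  let ?AA = "addrow (-1) k p ?A"
  let ?AB = "addcol (-1) k p ?AA"
  define \<delta> where "\<delta> = int (hi t) - int (hi (last L))"
  define \<sigma> where "\<sigma> = int t - int (last L)"
  have lastL: "L ! (k - 1) = last L" using L unfolding k_def by (simp add: last_conv_nth)
  have Ac: "?A \<in> carrier_mat (Suc k) (Suc k)" unfolding k_def by (metis Mx_carrier length_append_singleton)
  have A1c: "?AA \<in> carrier_mat (Suc k) (Suc k)" using Ac by simp
  have km1: "k - 1 = p" using kp by simp
  have pk: "p < k" using kp by simp
  note E = Mx_snoc_entries[OF k_def[symmetric] L, where t = t, unfolded km1]
  have lastL': "L ! p = last L" using lastL kp by simp
  have d1: "det ?AA = det ?A" by (rule det_addrow[OF _ _ Ac]) (use kp in auto)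
  have d2: "det ?AB = det ?AA" by (rule det_addcol[OF _ _ A1c]) (use kp in auto)
  have s1: "int (lo t) + int (hi t) = int t + 3" using lo_hi_sum[of t] by linarith
  have s2: "int (lo (last L)) + int (hi (last L)) = int (last L) + 3" using lo_hi_sum[of "last L"] by linarith
  have eq: "?AB = Zm (Mx L) \<delta> (- \<sigma>)"
  proof (rule eq_matI)
    fix i j assume "i < dim_row (Zm (Mx L) \<delta> (- \<sigma>))" "j < dim_col (Zm (Mx L) \<delta> (- \<sigma>))"
    then have i: "i < Suc k" and j: "j < Suc k" unfolding k_def by (auto simp: Zm_def)
    have Zent: "Zm (Mx L) \<delta> (- \<sigma>) $$ (i,j) = (if i < k \<and> j < k then Mx L $$ (i,j)
              else if i = k \<and> j = k then - \<sigma> else \<delta>)"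
      using i j unfolding Zm_def k_def by simp
    have A2ent: "?AB $$ (i,j) = (if j = k then - (?AA $$ (i, p)) + ?AA $$ (i,j) else ?AA $$ (i,j))"
      using index_mat_addcol(1)[of i ?AA j "-1" k p] i j A1c by auto
    have A1ent: "?AA $$ (i',j') = (if i' = k then - (?A $$ (p, j')) + ?A $$ (i',j') else ?A $$ (i',j'))"
      if "i' < Suc k" "j' < Suc k" for i' j'
      using index_mat_addrow(1)[of i' ?A j' "(+)" "(*)" "-1" k p] that Ac by auto
    have km: "p < Suc k" using kp by simp
    show "?AB $$ (i,j) = Zm (Mx L) \<delta> (- \<sigma>) $$ (i,j)"
    proof (cases "i < k")
      case True
      note iT = True
      show ?thesis
      proof (cases "j < k")
        case True
        then show ?thesis unfolding A2ent Zent using iT i j by (simp add: A1ent E(1))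
      next
        case False
        then have jk: "j = k" using j by simp
        show ?thesis unfolding A2ent Zent A1ent[OF i km] A1ent[OF i j] using iT jk k0 lastL' by (simp add: E(3) E(6) \<delta>_def)
      qed
    next
      case False
      then have ik: "i = k" using i by simp
      show ?thesis
      proof (cases "j < k")
        case True
        then show ?thesis unfolding A2ent Zent A1ent[OF i j] using ik k0 lastL' by (simp add: E(2) E(5) \<delta>_def)
      next
        case False
        then have jk: "j = k" using j by simp
        have "?AB $$ (i,j) = - (- (?A $$ (p, p)) + ?A $$ (k, p)) + (- (?A $$ (p, k)) + ?A $$ (k,k))"
          unfolding A2ent A1ent[OF i km] A1ent[OF i j] using ik jk k0 by simp
        also have "\<dots> = - \<sigma>"
          using k0 lastL' s1 s2 E(5)[OF pk] E(4) E(7) E(8) by (simp add: E(4) E(7) E(8) \<sigma>_def)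
        finally show ?thesis unfolding Zent using ik jk by simp
      qed
    qed
  qed (use Ac in \<open>auto simp: Zm_def k_def\<close>)
  have "det ?A = det (Zm (Mx L) \<delta> (- \<sigma>))" using d1 d2 eq by simp
  also have "\<dots> = - \<sigma> * det (Mx L) + \<delta>^2 * Bd L"
    unfolding Bd_def by (rule Zm_det[OF Mx_carrier])
  finally show ?thesis unfolding \<sigma>_def \<delta>_def .
qed

lemma Bd_snoc:
  assumes L: "L \<noteq> []"
  shows "Bd (L @ [t]) = - (int t - int (last L)) * Bd L"
proof -
  define k where "k = length L"
  have k0: "k > 0" using L unfolding k_def by auto
  obtain p where kp: "k = Suc p" using k0 by (cases k) auto
  have km1: "k - 1 = p" using kp by simp
  have pk: "p < k" using kp by simp
  let ?A = "Mx (L @ [t])"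
  let ?Y = "Zm ?A 1 0"
  define \<delta> where "\<delta> = int (hi t) - int (hi (last L))"
  define \<sigma> where "\<sigma> = int t - int (last L)"
  let ?YA = "addrow (-1) k p ?Y"
  let ?YB = "addcol (-1) k p ?YA"
  let ?YC = "addrow (- \<delta>) k (Suc k) ?YB"
  have lastL: "L ! p = last L" using L kp k_def by (simp add: last_conv_nth)
  note E = Mx_snoc_entries[OF k_def[symmetric] L, where t = t, unfolded km1]
  have dA: "dim_row ?A = Suc k" unfolding k_def by simp
  have Yc: "?Y \<in> carrier_mat (Suc (Suc k)) (Suc (Suc k))" using Zm_carrier[of ?A 1 0] unfolding dA .
  have dY: "dim_row ?Y = Suc (Suc k)" "dim_col ?Y = Suc (Suc k)" using Yc by auto
  have Y1c: "?YA \<in> carrier_mat (Suc (Suc k)) (Suc (Suc k))" unfolding carrier_mat_def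
    using index_mat_addrow(4,5)[of "(+)" "(*)" "-1" k p ?Y] dY by simp
  have Y2c: "?YB \<in> carrier_mat (Suc (Suc k)) (Suc (Suc k))" unfolding carrier_mat_def
    using index_mat_addcol(4,5)[of "-1" k p ?YA] Y1c dY by simp
  have Y3c: "?YC \<in> carrier_mat (Suc (Suc k)) (Suc (Suc k))" unfolding carrier_mat_def
    using index_mat_addrow(4,5)[of "(+)" "(*)" "- \<delta>" k "Suc k" ?YB] Y2c dY by simp
  have d1: "det ?YA = det ?Y" by (rule det_addrow[OF _ _ Yc]) (use kp in auto)
  have d2: "det ?YB = det ?YA" by (rule det_addcol[OF _ _ Y1c]) (use kp in auto)
  have d3: "det ?YC = det ?YB" by (rule det_addrow[OF _ _ Y2c]) auto
  have s1: "int (lo t) + int (hi t) = int t + 3" using lo_hi_sum[of t] by linarith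
  have s2: "int (lo (last L)) + int (hi (last L)) = int (last L) + 3" using lo_hi_sum[of "last L"] by linarith
  have Yent: "?Y $$ (i,j) = (if i < Suc k \<and> j < Suc k then ?A $$ (i,j)
       else if i = Suc k \<and> j = Suc k then 0 else 1)" if "i < Suc (Suc k)" "j < Suc (Suc k)" for i j
    using that dA unfolding Zm_def by simp
  have Y1ent: "?YA $$ (i,j) = (if i = k then - (?Y $$ (p, j)) + ?Y $$ (i,j) else ?Y $$ (i,j))"
    if "i < Suc (Suc k)" "j < Suc (Suc k)" for i j
    using index_mat_addrow(1)[of i ?Y j "(+)" "(*)" "-1" k p] that Yc dY by auto
  have Y2ent: "?YB $$ (i,j) = (if j = k then - (?YA $$ (i, p)) + ?YA $$ (i,j) else ?YA $$ (i,j))"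
    if "i < Suc (Suc k)" "j < Suc (Suc k)" for i j
    using index_mat_addcol(1)[of i ?YA j "-1" k p] that Y1c dY by auto
  have Y3ent: "?YC $$ (i,j) = (if i = k then - \<delta> * ?YB $$ (Suc k, j) + ?YB $$ (i,j) else ?YB $$ (i,j))"
    if "i < Suc (Suc k)" "j < Suc (Suc k)" for i j
    using index_mat_addrow(1)[of i ?YB j "(+)" "(*)" "- \<delta>" k "Suc k"] that Y2c dY by auto
  have ik: "k < Suc (Suc k)" "p < Suc (Suc k)" "Suc k < Suc (Suc k)" using kp by auto
  have row: "?YC $$ (k, j) = (if j = k then - \<sigma> else 0)" if j: "j < Suc (Suc k)" for j
  proof -
    consider "j < k" | "j = k" | "j = Suc k" using j by linarith
    then show ?thesis
    proof cases
      case 1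
      then have "?YC $$ (k, j) = - \<delta> * ?Y $$ (Suc k, j) + (- (?Y $$ (p, j)) + ?Y $$ (k, j))"
        unfolding Y3ent[OF ik(1) j] Y2ent[OF ik(3) j] Y2ent[OF ik(1) j] Y1ent[OF ik(3) j] Y1ent[OF ik(1) j]
        by simp
      also have "\<dots> = 0"
        unfolding Yent[OF ik(3) j] Yent[OF ik(2) j] Yent[OF ik(1) j] using 1 pk lastL E(2)[OF 1] E(5)[OF 1]
        by (simp add: \<delta>_def)
      finally show ?thesis using 1 by simp
    next
      case 2
      have "?YC $$ (k, j) = - \<delta> * (- (?Y $$ (Suc k, p)) + ?Y $$ (Suc k, k))
          + (- (- (?Y $$ (p, p)) + ?Y $$ (k, p)) + (- (?Y $$ (p, k)) + ?Y $$ (k, k)))"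
        unfolding 2 Y3ent[OF ik(1) ik(1)] Y2ent[OF ik(3) ik(1)] Y2ent[OF ik(1) ik(1)]
          Y1ent[OF ik(3) ik(2)] Y1ent[OF ik(3) ik(1)] Y1ent[OF ik(1) ik(2)] Y1ent[OF ik(1) ik(1)]
        using pk by simp
      also have "\<dots> = - \<sigma>"
        unfolding Yent[OF ik(2) ik(2)] Yent[OF ik(3) ik(2)] Yent[OF ik(3) ik(1)] Yent[OF ik(1) ik(2)]
          Yent[OF ik(2) ik(1)] Yent[OF ik(1) ik(1)]
        using pk kp lastL s1 s2 E(5)[OF pk] E(4) E(7) E(8) by (simp add: \<sigma>_def)
      finally show ?thesis using 2 by simp
    next
      case 3
      have "?YC $$ (k, j) = - \<delta> * ?Y $$ (Suc k, Suc k) + (- (?Y $$ (p, Suc k)) + ?Y $$ (k, Suc k))"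
        unfolding 3 Y3ent[OF ik(1) ik(3)] Y2ent[OF ik(3) ik(3)] Y2ent[OF ik(1) ik(3)]
          Y1ent[OF ik(3) ik(3)] Y1ent[OF ik(1) ik(3)]
        by simp
      also have "\<dots> = 0"
        unfolding Yent[OF ik(3) ik(3)] Yent[OF ik(2) ik(3)] Yent[OF ik(1) ik(3)] using pk by simp
      finally show ?thesis using 3 by simp
    qed
  qed
  have del: "mat_delete ?YC k k = Zm (Mx L) 1 0"
  proof (rule eq_matI)
    fix i j assume "i < dim_row (Zm (Mx L) 1 0)" "j < dim_col (Zm (Mx L) 1 0)"
    then have i: "i < Suc k" and j: "j < Suc k" unfolding k_def by (auto simp: Zm_def)
    define ii where "ii = (if i < k then i else Suc i)"
    define jj where "jj = (if j < k then j else Suc j)"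
    have ii: "ii < Suc (Suc k)" "ii \<noteq> k" and jj: "jj < Suc (Suc k)" "jj \<noteq> k"
      using i j unfolding ii_def jj_def by auto
    have "mat_delete ?YC k k $$ (i, j) = ?YC $$ (ii, jj)"
      using i j Y3c dY unfolding mat_delete_def ii_def jj_def by simp
    also have "\<dots> = ?Y $$ (ii, jj)"
      unfolding Y3ent[OF ii(1) jj(1)] Y2ent[OF ii(1) jj(1)] Y1ent[OF ii(1) jj(1)] using ii jj by simp
    also have "\<dots> = Zm (Mx L) 1 0 $$ (i, j)"
      unfolding Yent[OF ii(1) jj(1)] using i j
      by (auto simp: Zm_def ii_def jj_def k_def E(1))
    finally show "mat_delete ?YC k k $$ (i, j) = Zm (Mx L) 1 0 $$ (i, j)" .
  qed (use Y3c in \<open>auto simp: Zm_def k_def\<close>)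
  have "det ?YC = (\<Sum>j<Suc (Suc k). ?YC $$ (k,j) * cofactor ?YC k j)"
    by (rule laplace_expansion_row[OF Y3c]) simp
  also have "\<dots> = (\<Sum>j<Suc (Suc k). (if j = k then - \<sigma> * cofactor ?YC k k else 0))"
    by (intro sum.cong refl) (simp add: row)
  also have "\<dots> = - \<sigma> * cofactor ?YC k k"
    by (simp add: sum.delta)
  also have "cofactor ?YC k k = Bd L"
    unfolding cofactor_def Bd_def del by simp
  finally have "det ?YC = - \<sigma> * Bd L" .
  then show ?thesis unfolding Bd_def[of "L @ [t]"] using d1 d2 d3 by (simp add: \<sigma>_def)
qed

lemma Mx_single_det: "det (Mx [s]) = int (hi s) - int (lo s)"
  by (subst det_single[of "Mx [s]"]) (auto simp: Mx_def)

lemma Bd_single: "Bd [s] = -1"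
proof -
  let ?Z = "Zm (Mx [s]) 1 0"
  have Zc: "?Z \<in> carrier_mat 2 2" using Zm_carrier[of "Mx [s]" 1 0] by (simp add: numeral_2_eq_2)
  have e1: "?Z $$ (1,0) = 1" and e2: "?Z $$ (1,1) = 0" by (simp_all add: Zm_def)
  have c: "cofactor ?Z 1 0 = - det (mat_delete ?Z 1 0)" by (simp add: cofactor_def)
  have d: "det (mat_delete ?Z 1 0) = 1"
    by (subst det_single) (auto simp: mat_delete_def Zm_def)
  have "det ?Z = (\<Sum>j<2. ?Z $$ (1,j) * cofactor ?Z 1 j)"
    by (rule laplace_expansion_row[OF Zc]) simp
  also have "\<dots> = ?Z $$ (1,0) * cofactor ?Z 1 0 + ?Z $$ (1,1) * cofactor ?Z 1 1"
    by (simp add: numeral_2_eq_2)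
  also have "\<dots> = -1" unfolding e1 e2 c d by simp
  finally show ?thesis unfolding Bd_def .
qed

definition pairs :: "nat list \<Rightarrow> (nat \<times> nat) list" where
  "pairs L = zip L (tl L)"

lemma pairs_snoc: "L \<noteq> [] \<Longrightarrow> pairs (L @ [t]) = pairs L @ [(last L, t)]"
  unfolding pairs_def
proof (induction L)
  case Nil then show ?case by simp
next
  case (Cons a L)
  then show ?case by (cases L) auto
qed

definition Pp :: "nat list \<Rightarrow> real" where
  "Pp L = prod_list (map (\<lambda>(a,b). real b - real a) (pairs L))"

definition gg :: "nat \<Rightarrow> nat \<Rightarrow> real" where
  "gg a b = (real (hi b) - real (hi a))^2 / (real b - real a)"

definition Rr :: "nat list \<Rightarrow> real" where
  "Rr L = (real (hi (hd L)) - real (lo (hd L))) + sum_list (map (\<lambda>(a,b). gg a b) (pairs L))"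

definition ww :: "nat list \<Rightarrow> real" where
  "ww L = Pp L * Rr L"

lemma closed_forms:
  assumes "L \<noteq> []" "sorted_wrt (<) L"
  shows "real_of_int (Bd L) = (-1)^(length L) * Pp L
       \<and> real_of_int (det (Mx L)) = (-1)^(length L - 1) * ww L"
  using assms
proof (induction L rule: rev_induct)
  case Nil then show ?case by simp
next
  case (snoc t xs)
  show ?case
  proof (cases "xs = []")
    case True
    then show ?thesis
      by (simp add: Bd_single Mx_single_det Pp_def pairs_def ww_def Rr_def)
  next
    case False
    have sx: "sorted_wrt (<) xs" using snoc.prems by (simp add: sorted_wrt_append)
    have lt: "last xs < t" using snoc.prems False by (simp add: sorted_wrt_append)
    from snoc.IH[OF False sx] have IH1: "real_of_int (Bd xs) = (-1)^(length xs) * Pp xs"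
      and IH2: "real_of_int (det (Mx xs)) = (-1)^(length xs - 1) * ww xs" by auto
    have pp: "Pp (xs @ [t]) = Pp xs * (real t - real (last xs))"
      unfolding Pp_def pairs_snoc[OF False] by simp
    have rr: "Rr (xs @ [t]) = Rr xs + gg (last xs) t"
      unfolding Rr_def pairs_snoc[OF False] using False by simp
    have ne: "real t - real (last xs) \<noteq> 0" using lt by simp
    obtain m where m: "length xs = Suc m" using False by (cases xs) auto
    have "real_of_int (Bd (xs @ [t])) = - (real t - real (last xs)) * real_of_int (Bd xs)"
      unfolding Bd_snoc[OF False] using lt by simp
    also have "\<dots> = (-1)^(length (xs @ [t])) * Pp (xs @ [t])"
      unfolding IH1 pp by (simp add: algebra_simps)
    finally have A: "real_of_int (Bd (xs @ [t])) = (-1)^(length (xs @ [t])) * Pp (xs @ [t])" .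
    have "real_of_int (det (Mx (xs @ [t]))) = - (real t - real (last xs)) * real_of_int (det (Mx xs))
        + (real (hi t) - real (hi (last xs)))^2 * real_of_int (Bd xs)"
      unfolding Mx_snoc_det[OF False] using lt by simp
    also have "\<dots> = (-1)^(length (xs @ [t]) - 1) * ww (xs @ [t])"
      unfolding IH1 IH2 ww_def pp rr gg_def using ne m
      by (simp add: field_simps)
    finally show ?thesis using A by simp
  qed
qed

lemma pairs_Cons2[simp]: "pairs (x # y # L) = (x, y) # pairs (y # L)"
  unfolding pairs_def by simp

lemma pairs_single[simp]: "pairs [x] = []"
  unfolding pairs_def by simp

lemma pairs_lt: "sorted_wrt (<) L \<Longrightarrow> (a, b) \<in> set (pairs L) \<Longrightarrow> a < b"
proof (induction L)
  case Nil then show ?case by (simp add: pairs_def)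
next
  case (Cons x L)
  show ?case
  proof (cases L)
    case Nil then show ?thesis using Cons by simp
  next
    case (Cons y L')
    with Cons.prems Cons.IH show ?thesis by auto
  qed
qed

lemma pairs_append: "X \<noteq> [] \<Longrightarrow> pairs (X @ y # Y) = pairs X @ [(last X, y)] @ pairs (y # Y)"
proof (induction X)
  case Nil then show ?case by simp
next
  case (Cons a X)
  show ?case
  proof (cases X)
    case Nil then show ?thesis by simp
  next
    case (Cons b X')
    with Cons.IH show ?thesis by simp
  qed
qed

lemma alpha_bounds: "1 \<le> real (hi k) - real (lo k)" "real (hi k) - real (lo k) \<le> 2"
  unfolding hi_def lo_def by linarith+

lemma gg_nonneg: "a < b \<Longrightarrow> gg a b \<ge> 0"
  unfolding gg_def by simp

lemma prod_list_pos_real: "(\<And>x. x \<in> set xs \<Longrightarrow> (x::real) > 0) \<Longrightarrow> prod_list xs > 0"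
  by (induction xs) auto

lemma Pp_pos: "sorted_wrt (<) L \<Longrightarrow> Pp L > 0"
  unfolding Pp_def
  by (rule prod_list_pos_real) (auto dest: pairs_lt)

lemma sum_gg_nonneg: "sorted_wrt (<) L \<Longrightarrow> sum_list (map (\<lambda>(a,b). gg a b) (pairs L)) \<ge> 0"
  by (rule sum_list_nonneg) (auto dest: pairs_lt intro: gg_nonneg)

lemma Rr_pos: "sorted_wrt (<) L \<Longrightarrow> Rr L \<ge> 1"
  unfolding Rr_def using sum_gg_nonneg[of L] alpha_bounds(1)[of "hd L"] by linarith

lemma ww_pos: "sorted_wrt (<) L \<Longrightarrow> ww L > 0"
  unfolding ww_def using Pp_pos Rr_pos by (smt (verit) mult_pos_pos)

lemma insort_cases:
  assumes "sorted_wrt (<) L" "L \<noteq> []" "t \<notin> set L"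
  shows "(insort t L = t # L \<and> t < hd L) \<or> (insort t L = L @ [t] \<and> last L < t)
    \<or> (\<exists>A a b B. L = A @ [a, b] @ B \<and> insort t L = A @ [a, t, b] @ B \<and> a < t \<and> t < b)"
  using assms
proof (induction L)
  case Nil then show ?case by simp
next
  case (Cons x L)
  show ?case
  proof (cases "t < x")
    case True
    then have "t \<le> x" by simp
    then show ?thesis using True by simp
  next
    case False
    then have xt: "x < t" using Cons.prems by auto
    show ?thesis
    proof (cases L)
      case Nil
      have "\<not> t \<le> x" using xt by simp
      then show ?thesis using xt Nil by simp
    next
      case (Cons y L')
      have sL: "sorted_wrt (<) L" "L \<noteq> []" "t \<notin> set L" using Cons.prems Cons by auto
      have "\<not> t \<le> x" using xt by simp
      then have ins: "insort t (x # L) = x # insort t L" by simp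
      from Cons.IH[OF sL] show ?thesis
      proof (elim disjE exE conjE)
        assume "insort t L = t # L" "t < hd L"
        then show ?thesis using ins xt Cons
          by (intro disjI2) (rule exI[of _ "[]"], auto)
      next
        assume "insort t L = L @ [t]" "last L < t"
        then show ?thesis using ins Cons by auto
      next
        fix A a b B assume "L = A @ [a, b] @ B" "insort t L = A @ [a, t, b] @ B" "a < t" "t < b"
        then show ?thesis using ins
          by (intro disjI2) (rule exI[of _ "x # A"], auto)
      qed
    qed
  qed
qed

lemma cs_ineq:
  fixes x y p q :: real
  assumes p: "p > 0" and q: "q > 0"
  shows "(x + y)^2 / (p + q) \<le> x^2 / p + y^2 / q"
proof -
  have id: "(x^2 * q + y^2 * p) * (p + q) - (x + y)^2 * (p * q) = (x * q - y * p)^2"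
    by (simp add: power2_eq_square algebra_simps)
  have "(x + y)^2 * (p * q) \<le> (x^2 * q + y^2 * p) * (p + q)"
    using id by (smt (verit) zero_le_power2)
  then have "(x + y)^2 / (p + q) \<le> (x^2 * q + y^2 * p) / (p * q)"
    using p q by (simp add: divide_le_eq le_divide_eq field_simps)
  also have "\<dots> = x^2 / p + y^2 / q" using p q by (simp add: field_simps)
  finally show ?thesis .
qed

lemma pq_ineq:
  fixes p q :: real
  assumes "p \<ge> 1" "q \<ge> 1"
  shows "p + q \<le> 2 * (p * q)"
proof -
  have "0 \<le> (p - 1) * (q - 1)" using assms by simp
  moreover have "1 \<le> p * q" using assms by (metis mult_mono' one_le_mult_iff mult_1_left zero_le_one order_trans)
  ultimately show ?thesis by (simp add: algebra_simps)
qed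

lemma sorted_wrt_less_nat_step: "sorted_wrt (<) (L :: nat list) \<Longrightarrow> (a, b) \<in> set (pairs L) \<Longrightarrow> 1 \<le> real b - real a"
  using pairs_lt[of L a b] by simp

lemma ww_insort:
  assumes sL: "sorted_wrt (<) L" and ne: "L \<noteq> []" and tL: "t \<notin> set L"
  shows "ww L \<le> 2 * ww (insort t L)"
proof -
  define S where "S = sum_list (map (\<lambda>(a,b). gg a b) (pairs L))"
  have S0: "S \<ge> 0" unfolding S_def by (rule sum_gg_nonneg[OF sL])
  have P0: "Pp L > 0" by (rule Pp_pos[OF sL])
  from insort_cases[OF sL ne tL] show ?thesis
  proof (elim disjE exE conjE)
    assume ins: "insort t L = t # L" and th: "t < hd L"
    obtain h L0 where L: "L = h # L0" using ne by (cases L) auto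
    have pL: "pairs (t # L) = (t, h) # pairs L" unfolding L by simp
    have Pp': "Pp (t # L) = (real h - real t) * Pp L" unfolding Pp_def pL by simp
    have Rr': "Rr (t # L) = (real (hi t) - real (lo t)) + gg t h + S"
      unfolding Rr_def pL S_def by simp
    have RrL: "Rr L = (real (hi h) - real (lo h)) + S" unfolding Rr_def S_def L by simp
    have ht: "real h - real t \<ge> 1" using th L by simp
    have g0: "gg t h \<ge> 0" using th L by (simp add: gg_nonneg)
    have "ww L = Pp L * ((real (hi h) - real (lo h)) + S)" unfolding ww_def RrL ..
    also have "\<dots> \<le> Pp L * (2 * (1 + S))"
      using alpha_bounds(2)[of h] S0 P0 by (intro mult_left_mono) auto
    also have "\<dots> \<le> 2 * ((real h - real t) * Pp L * ((real (hi t) - real (lo t)) + gg t h + S))"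
    proof -
      have "1 + S \<le> (real h - real t) * ((real (hi t) - real (lo t)) + gg t h + S)"
      proof -
        have "1 + S \<le> (real (hi t) - real (lo t)) + gg t h + S" using alpha_bounds(1)[of t] g0 by simp
        also have "\<dots> \<le> (real h - real t) * ((real (hi t) - real (lo t)) + gg t h + S)"
          using ht alpha_bounds(1)[of t] g0 S0 by (intro mult_le_cancel_right1[THEN iffD2]) (auto simp del: of_nat_diff)
        finally show ?thesis .
      qed
      then have "Pp L * (1 + S) \<le> Pp L * ((real h - real t) * ((real (hi t) - real (lo t)) + gg t h + S))"
        using P0 by (intro mult_left_mono) auto
      moreover have "Pp L * (2 * (1 + S)) = 2 * (Pp L * (1 + S))" by (simp add: ac_simps)
      moreover have "2 * ((real h - real t) * Pp L * ((real (hi t) - real (lo t)) + gg t h + S))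
          = 2 * (Pp L * ((real h - real t) * ((real (hi t) - real (lo t)) + gg t h + S)))" by (simp add: ac_simps)
      ultimately show ?thesis by linarith
    qed
    finally show ?thesis unfolding ins ww_def Pp' Rr' by (simp add: algebra_simps)
  next
    assume ins: "insort t L = L @ [t]" and lt: "last L < t"
    have Pp': "Pp (L @ [t]) = Pp L * (real t - real (last L))"
      unfolding Pp_def pairs_snoc[OF ne] by simp
    have Rr': "Rr (L @ [t]) = Rr L + gg (last L) t"
      unfolding Rr_def pairs_snoc[OF ne] using ne by simp
    have st: "real t - real (last L) \<ge> 1" using lt by simp
    have g0: "gg (last L) t \<ge> 0" using lt by (simp add: gg_nonneg)
    have R1: "Rr L \<ge> 1" by (rule Rr_pos[OF sL])
    have "ww L \<le> Pp L * (real t - real (last L)) * (Rr L + gg (last L) t)"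
    proof -
      have "Rr L \<le> (real t - real (last L)) * (Rr L + gg (last L) t)"
      proof -
        have "Rr L \<le> Rr L + gg (last L) t" using g0 by simp
        also have "\<dots> \<le> (real t - real (last L)) * (Rr L + gg (last L) t)"
          using st g0 R1 by (intro mult_le_cancel_right1[THEN iffD2]) auto
        finally show ?thesis .
      qed
      then show ?thesis unfolding ww_def using P0 by (simp add: mult.assoc mult_left_mono)
    qed
    also have "\<dots> \<le> 2 * (Pp L * (real t - real (last L)) * (Rr L + gg (last L) t))"
      using P0 st g0 R1 by (simp add: zero_le_mult_iff)
    finally show ?thesis unfolding ins ww_def Pp' Rr' .
  next
    fix A a b B
    assume L: "L = A @ [a, b] @ B" and ins: "insort t L = A @ [a, t, b] @ B" and at: "a < t" and tb: "t < b"
    define X where "X = A @ [a]"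
    have Xne: "X \<noteq> []" and lX: "last X = a" unfolding X_def by auto
    have L2: "L = X @ b # B" unfolding L X_def by simp
    have L3: "insort t L = X @ t # b # B" unfolding ins X_def by simp
    have sX: "sorted_wrt (<) X" and sB: "sorted_wrt (<) (b # B)"
      using sL unfolding L2 by (auto simp: sorted_wrt_append)
    have pL: "pairs L = pairs X @ [(a, b)] @ pairs (b # B)"
      unfolding L2 pairs_append[OF Xne] lX ..
    have pL': "pairs (insort t L) = pairs X @ [(a, t)] @ [(t, b)] @ pairs (b # B)"
      unfolding L3 pairs_append[OF Xne] lX by simp
    have hd1a: "hd (insort t L) = hd X" unfolding L3 using Xne by simp
    have hd1b: "hd L = hd X" unfolding L2 using Xne by simp
    note hd1 = hd1a hd1b
    define P1 where "P1 = Pp X"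
    define P2 where "P2 = Pp (b # B)"
    define S1 where "S1 = sum_list (map (\<lambda>(a,b). gg a b) (pairs X))"
    define S2 where "S2 = sum_list (map (\<lambda>(a,b). gg a b) (pairs (b # B)))"
    define \<alpha> where "\<alpha> = real (hi (hd X)) - real (lo (hd X))"
    define p where "p = real t - real a"
    define q where "q = real b - real t"
    have p1: "p \<ge> 1" and q1: "q \<ge> 1" unfolding p_def q_def using at tb by auto
    have P10: "P1 > 0" unfolding P1_def by (rule Pp_pos[OF sX])
    have P20: "P2 > 0" unfolding P2_def by (rule Pp_pos[OF sB])
    have S10: "S1 \<ge> 0" unfolding S1_def by (rule sum_gg_nonneg[OF sX])
    have S20: "S2 \<ge> 0" unfolding S2_def by (rule sum_gg_nonneg[OF sB])
    have a1: "\<alpha> \<ge> 1" unfolding \<alpha>_def by (rule alpha_bounds(1))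
    have ba: "real b - real a = p + q" unfolding p_def q_def by simp
    have wL: "ww L = P1 * (p + q) * P2 * (\<alpha> + S1 + gg a b + S2)"
      unfolding ww_def Pp_def Rr_def pL hd1 P1_def P2_def S1_def S2_def \<alpha>_def Pp_def ba[symmetric]
      by (simp add: algebra_simps)
    have wL': "ww (insort t L) = P1 * (p * q) * P2 * (\<alpha> + S1 + (gg a t + gg t b) + S2)"
      unfolding ww_def Pp_def Rr_def pL' hd1 P1_def P2_def S1_def S2_def \<alpha>_def Pp_def p_def q_def
      by (simp add: algebra_simps)
    have gab: "gg a b \<le> gg a t + gg t b"
    proof -
      have "gg a b = ((real (hi t) - real (hi a)) + (real (hi b) - real (hi t)))^2 / (p + q)"
        unfolding gg_def ba[symmetric] by simp
      also have "\<dots> \<le> (real (hi t) - real (hi a))^2 / p + (real (hi b) - real (hi t))^2 / q"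
        using p1 q1 by (intro cs_ineq) auto
      also have "\<dots> = gg a t + gg t b" unfolding gg_def p_def q_def ..
      finally show ?thesis .
    qed
    have g1: "gg a t \<ge> 0" "gg t b \<ge> 0" "gg a b \<ge> 0" using at tb by (simp_all add: gg_nonneg)
    have "ww L = (P1 * P2) * ((p + q) * (\<alpha> + S1 + gg a b + S2))" unfolding wL by (simp add: algebra_simps)
    also have "\<dots> \<le> (P1 * P2) * ((2 * (p * q)) * (\<alpha> + S1 + (gg a t + gg t b) + S2))"
    proof (rule mult_left_mono)
      show "(p + q) * (\<alpha> + S1 + gg a b + S2) \<le> (2 * (p * q)) * (\<alpha> + S1 + (gg a t + gg t b) + S2)"
        using pq_ineq[OF p1 q1] gab a1 S10 S20 g1 p1 q1
        by (intro mult_mono) (auto simp: gg_nonneg at tb)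
      show "0 \<le> P1 * P2" using P10 P20 by simp
    qed
    also have "\<dots> = 2 * ww (insort t L)" unfolding wL' by (simp add: algebra_simps)
    finally show ?thesis .
  qed
qed

lemma D_path_carrier: "D_path n \<in> carrier_mat (2 * n - 3) (2 * n - 3)"
  unfolding D_path_def by simp

lemma sl_strict: "sorted_wrt (<) (sorted_list_of_set (T :: nat set))"
  using strict_sorted_list_of_set[of T] by simp

lemma psub_D_path:
  assumes T: "T \<subseteq> {0..<2 * n - 3}"
  shows "psub (D_path n) T = Mx (sorted_list_of_set T)"
proof -
  let ?L = "sorted_list_of_set T"
  have fT: "finite T" using T finite_subset by blast
  have len: "length ?L = card T" by simp
  have inT: "i < card T \<Longrightarrow> ?L ! i < 2 * n - 3" for i
    using T fT len by (metis atLeastLessThan_iff nth_mem set_sorted_list_of_set subsetD)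
  have mono: "i \<le> j \<Longrightarrow> j < card T \<Longrightarrow> ?L ! i \<le> ?L ! j" for i j
    using sorted_nth_mono[of ?L i j] len by simp
  have mx: "max (?L ! i) (?L ! j) = ?L ! max i j" "min (?L ! i) (?L ! j) = ?L ! min i j"
    if "i < card T" "j < card T" for i j
    using mono[of i j] mono[of j i] that by (auto simp: max_def min_def)
  show ?thesis
    by (rule eq_matI) (auto simp: psub_def Mx_def D_entry inT mx)
qed

definition wS :: "nat set \<Rightarrow> real" where
  "wS T = ww (sorted_list_of_set T)"

lemma wS_pos: "wS T > 0"
  unfolding wS_def by (rule ww_pos[OF sl_strict])

lemma det_psub_real:
  assumes T: "T \<subseteq> {0..<2 * n - 3}" and m: "card T = m" and m1: "m \<ge> 1"
  shows "real_of_int (det (psub (D_path n) T)) = (-1)^(m - 1) * wS T"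
proof -
  have fT: "finite T" using T finite_subset by blast
  have ne: "sorted_list_of_set T \<noteq> []" using m m1 fT by auto
  show ?thesis
    unfolding psub_D_path[OF T] wS_def
    using closed_forms[OF ne sl_strict] m fT by simp
qed

lemma coeff_real:
  assumes l: "l < 2 * n - 3"
  shows "real_of_int (coeff (char_poly (D_path n)) l)
       = - (\<Sum>T\<in>Sub {0..<2 * n - 3} (2 * n - 3 - l). wS T)"
proof -
  let ?N = "2 * n - 3"
  let ?m = "?N - l"
  have m1: "?m \<ge> 1" using l by simp
  have "real_of_int (coeff (char_poly (D_path n)) l)
      = (\<Sum>T\<in>Sub {0..<?N} ?m. (-1)^?m * real_of_int (det (psub (D_path n) T)))"
    unfolding coeff_char_poly_minors[OF D_path_carrier less_imp_le[OF l]] by simp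
  also have "\<dots> = (\<Sum>T\<in>Sub {0..<?N} ?m. - wS T)"
  proof (intro sum.cong refl)
    fix T assume "T \<in> Sub {0..<?N} ?m"
    then have T: "T \<subseteq> {0..<?N}" and c: "card T = ?m" unfolding Sub_def by auto
    have "(-1::real)^?m * (-1)^(?m - 1) = (-1)^(?m - 1 + ?m)" by (simp add: power_add)
    also have "?m - 1 + ?m = Suc (2 * (?m - 1))" using m1 by simp
    finally have e: "(-1::real)^?m * (-1)^(?m - 1) = -1" by simp
    show "(-1)^?m * real_of_int (det (psub (D_path n) T)) = - wS T"
      unfolding det_psub_real[OF T c m1] using e by (simp add: mult.assoc[symmetric])
  qed
  also have "\<dots> = - (\<Sum>T\<in>Sub {0..<?N} ?m. wS T)" by (simp add: sum_negf)
  finally show ?thesis .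
qed

definition WW :: "nat \<Rightarrow> nat \<Rightarrow> real" where
  "WW N m = (\<Sum>T\<in>Sub {0..<N} m. wS T)"

lemma WW_pos:
  assumes "m \<le> N"
  shows "WW N m > 0"
proof -
  have mem: "{0..<m} \<in> Sub {0..<N} m" using assms unfolding Sub_def by auto
  show ?thesis unfolding WW_def
    by (rule sum_pos2[OF finite_Sub[OF finite_atLeastLessThan] mem]) (auto simp: wS_pos less_imp_le)
qed

lemma wS_insert:
  assumes V: "finite V" "V \<noteq> {}" and x: "x \<notin> V"
  shows "wS V \<le> 2 * wS (insert x V)"
proof -
  have "sorted_list_of_set (insert x V) = insort x (sorted_list_of_set V)"
    using sorted_list_of_set_insert_remove[OF V(1), of x] x by simp
  moreover have "sorted_list_of_set V \<noteq> []" using V by simp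
  moreover have "x \<notin> set (sorted_list_of_set V)" using V x by simp
  ultimately show ?thesis unfolding wS_def using ww_insort[OF sl_strict] by simp
qed

lemma WW_step:
  assumes m1: "m \<ge> 1" and mN: "m \<le> N"
  shows "real (N - m) * WW N m \<le> 2 * (real (Suc m) * WW N (Suc m))"
proof -
  let ?U = "{0..<N}"
  have "real (Suc m) * WW N (Suc m) = (\<Sum>T\<in>Sub ?U (Suc m). \<Sum>x\<in>T. wS T)"
    unfolding WW_def sum_distrib_left
    by (intro sum.cong refl) (auto simp: Sub_def)
  also have "\<dots> = (\<Sum>V\<in>Sub ?U m. \<Sum>x\<in>?U - V. wS (insert x V))"
    by (rule sum_Sub_reindex) simp
  finally have e: "real (Suc m) * WW N (Suc m) = (\<Sum>V\<in>Sub ?U m. \<Sum>x\<in>?U - V. wS (insert x V))" .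
  have "real (N - m) * WW N m = (\<Sum>V\<in>Sub ?U m. \<Sum>x\<in>?U - V. wS V)"
    unfolding WW_def sum_distrib_left
  proof (intro sum.cong refl)
    fix V assume "V \<in> Sub ?U m"
    then have "V \<subseteq> ?U" "card V = m" unfolding Sub_def by auto
    then have "card (?U - V) = N - m" by (simp add: card_Diff_subset finite_subset)
    then show "real (N - m) * wS V = (\<Sum>x\<in>?U - V. wS V)" by simp
  qed
  also have "\<dots> \<le> (\<Sum>V\<in>Sub ?U m. \<Sum>x\<in>?U - V. 2 * wS (insert x V))"
  proof (intro sum_mono)
    fix V x assume V: "V \<in> Sub ?U m" and x: "x \<in> ?U - V"
    then have "V \<subseteq> ?U" "card V = m" unfolding Sub_def by auto
    then have "finite V" "V \<noteq> {}" using m1 finite_subset by auto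
    then show "wS V \<le> 2 * wS (insert x V)" using wS_insert x by auto
  qed
  also have "\<dots> = 2 * (real (Suc m) * WW N (Suc m))"
    unfolding e by (simp add: sum_distrib_left)
  finally show ?thesis .
qed

theorem theorem5p14:
  fixes n l :: nat
  assumes "n > 2"
    and "l \<le> 2 * n - 4"
    and "\<bar>coeff (char_poly (D_path n)) l\<bar> =
           Max {\<bar>coeff (char_poly (D_path n)) i\<bar> | i. i \<le> 2 * n - 4}"
  shows "l \<le> (7 * n) div 5"
proof (rule ccontr)
  assume "\<not> l \<le> (7 * n) div 5"
  then have big: "l > (7 * n) div 5" by simp
  let ?N = "2 * n - 3"
  let ?c = "\<lambda>i. coeff (char_poly (D_path n)) i"
  define m where "m = ?N - l"
  have lN: "l < ?N" using assms(1,2) by simp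
  have l1: "l \<ge> 1" using big by simp
  have m1: "m \<ge> 1" and mN: "m \<le> ?N" unfolding m_def using lN by auto
  have m1N: "Suc m \<le> ?N" unfolding m_def using lN l1 by simp
  have cl: "real_of_int (?c l) = - WW ?N m"
    unfolding WW_def m_def by (rule coeff_real[OF lN])
  have cl1: "real_of_int (?c (l - 1)) = - WW ?N (Suc m)"
  proof -
    have "?N - (l - 1) = Suc m" unfolding m_def using lN l1 by simp
    then show ?thesis unfolding WW_def using coeff_real[of "l - 1" n] lN by simp
  qed
  have W0: "WW ?N m > 0" by (rule WW_pos[OF mN])
  have W1: "WW ?N (Suc m) > 0" by (rule WW_pos[OF m1N])
  have step: "real (?N - m) * WW ?N m \<le> 2 * (real (Suc m) * WW ?N (Suc m))"
    by (rule WW_step[OF m1 mN])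
  have ineq: "?N - m > 2 * Suc m"
  proof -
    have "5 * ((7 * n) div 5) + 4 \<ge> 7 * n" by linarith
    then have "3 * l > 4 * n - 4" using big by linarith
    then show ?thesis unfolding m_def using lN assms(1) by arith
  qed
  have r: "real (2 * Suc m) < real (?N - m)" using ineq by (simp only: of_nat_less_iff)
  have "real (2 * Suc m) * WW ?N m < real (?N - m) * WW ?N m"
    by (rule mult_strict_right_mono[OF r W0])
  moreover have "real (2 * Suc m) * WW ?N m = 2 * (real (Suc m) * WW ?N m)" by (simp only: of_nat_mult mult.assoc of_nat_numeral)
  ultimately have "2 * (real (Suc m) * WW ?N m) < real (?N - m) * WW ?N m" by (simp only:)
  then have "2 * (real (Suc m) * WW ?N m) < 2 * (real (Suc m) * WW ?N (Suc m))"
    using step by linarith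
  then have lt: "WW ?N m < WW ?N (Suc m)" by simp
  have "\<bar>real_of_int (?c l)\<bar> < \<bar>real_of_int (?c (l - 1))\<bar>"
    unfolding cl cl1 using lt W0 W1 by simp
  then have lt2: "\<bar>?c l\<bar> < \<bar>?c (l - 1)\<bar>" by linarith
  have fin: "finite {\<bar>?c i\<bar> | i. i \<le> 2 * n - 4}" by simp
  have "\<bar>?c (l - 1)\<bar> \<in> {\<bar>?c i\<bar> | i. i \<le> 2 * n - 4}" using assms(2) by auto
  then have "\<bar>?c (l - 1)\<bar> \<le> \<bar>?c l\<bar>" using Max_ge[OF fin] assms(3) by simp
  then show False using lt2 by simp
qed

end
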